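(* Let $K\le N$ and for $\mathbf{X}\in\mathbb{R}^{N\times K}$ define $$\ell_{\mathrm{om}}(\mathbf{X})=K\|\mathbf{X}^{\mathrm T}\mathbf{X}\|_{\mathrm F}^2-\|\mathbf{X}\|_{\mathrm F}^4.$$ If $\mathbf{X}=\mathbf{U}\mathbf{S}\mathbf{V}^{\mathrm T}$ is a singular value decomposition of $\mathbf{X}$ with singular values $S_{1,1},\dots,S_{K,K}$, then $$\ell_{\mathrm{om}}(\mathbf{X})=K\sum_{k=1}^K S_{k,k}^4-\Big(\sum_{k=1}^K S_{k,k}^2\Big)^2.$$ Moreover, $\ell_{\mathrm{om}}(\mathbf{X})\ge0$ for all $\mathbf{X}$, and $\ell_{\mathrm{om}}(\mathbf{X})=0$ if and only if $\mathbf{X}^{\mathrm T}\mathbf{X}=\alpha\mathbf{I}_K$ for some $\alpha\ge0$ (i.e., the columns of $\mathbf{X}$ are pairwise orthogonal and of equal length). Furthermore, $\ell_{\mathrm{om}}$ has no spurious stationary points: $\nabla_{\mathbf{X}}\ell_{\mathrm{om}}(\mathbf{X})=\mathbf{0}$ holds only if $\mathbf{X}^{\mathrm T}\mathbf{X}=\alpha\mathbf{I}_K$ for some $\alpha\ge0$.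
   Context: $\|\cdot\|_{\mathrm F}$ denotes the Frobenius norm and $\mathbf{I}_K$ the $K\times K$ identity matrix. A spurious stationary point of a differentiable function whose zero set is $\mathcal{X}$ is a point outside $\mathcal{X}$ where the gradient vanishes. *)

theory Defs
  imports "HOL-Analysis.Analysis"
begin

definition frob_norm :: "real^'n^'m \<Rightarrow> real" where
  "frob_norm A = sqrt (\<Sum>i\<in>UNIV. \<Sum>j\<in>UNIV. (A$i$j)^2)"

definition l_om :: "real^'k^'n \<Rightarrow> real" where
  "l_om X = real CARD('k) * (frob_norm (transpose X ** X))^2 - (frob_norm X)^4"

definition is_svd :: "real^'k^'n \<Rightarrow> real^'k^'n \<Rightarrow> real^'k^'k \<Rightarrow> real^'k^'k \<Rightarrow> bool" where
  "is_svd X U S V \<longleftrightarrow>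
     transpose U ** U = mat 1 \<and>
     transpose V ** V = mat 1 \<and> V ** transpose V = mat 1 \<and>
     (\<forall>i j. i \<noteq> j \<longrightarrow> S$i$j = 0) \<and> (\<forall>k. S$k$k \<ge> 0) \<and>
     X = U ** S ** transpose V"

end

theory Submission
  imports Defs
begin


lemma nth2_deriv: "((\<lambda>X::real^'k^'n. X$n$i) has_derivative (\<lambda>H. H$n$i)) F"
proof -
  have "bounded_linear (\<lambda>X::real^'k^'n. X$n$i)"
    using bounded_linear_compose[of "\<lambda>v::real^'k. v$i" "\<lambda>X::real^'k^'n. X$n"] by auto
  then show ?thesis by (rule bounded_linear_imp_has_derivative)
qed

definition gm :: "real^'k^'n \<Rightarrow> 'k \<Rightarrow> 'k \<Rightarrow> real" where
  "gm X i j = (\<Sum>n\<in>UNIV. X$n$i * X$n$j)"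

lemma frob_sq: "(frob_norm A)^2 = (\<Sum>i\<in>UNIV. \<Sum>j\<in>UNIV. (A$i$j)^2)"
  unfolding frob_norm_def by (simp add: sum_nonneg)

lemma G_nth: "(transpose X ** X)$i$j = gm X i j"
  by (simp add: matrix_matrix_mult_def transpose_def gm_def)

lemma frobX: "(frob_norm X)^2 = (\<Sum>k\<in>UNIV. gm X k k)"
  unfolding frob_sq gm_def by (subst sum.swap) (simp add: power2_eq_square)

lemma l_om_eq: "l_om X = real CARD('k) * (\<Sum>i\<in>UNIV. \<Sum>j\<in>UNIV. (gm X i j)^2) - (\<Sum>k\<in>UNIV. gm (X::real^'k^'n) k k)^2"
proof -
  have "(frob_norm X)^4 = ((frob_norm X)^2)^2" by simp
  also have "\<dots> = (\<Sum>k\<in>UNIV. gm X k k)^2" by (simp only: frobX)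
  finally have 1: "(frob_norm X)^4 = (\<Sum>k\<in>UNIV. gm X k k)^2" .
  have 2: "(frob_norm (transpose X ** X))^2 = (\<Sum>i\<in>UNIV. \<Sum>j\<in>UNIV. (gm X i j)^2)"
    by (simp only: frob_sq G_nth)
  show ?thesis unfolding l_om_def 1 2 ..
qed

lemma l_om_fun: "l_om = (\<lambda>X::real^'k^'n. real CARD('k) * (\<Sum>i\<in>UNIV. \<Sum>j\<in>UNIV. (\<Sum>n\<in>UNIV. X$n$i * X$n$j)^2) - (\<Sum>k\<in>UNIV. \<Sum>n\<in>UNIV. X$n$k * X$n$k)^2)"
  by (rule ext) (simp add: l_om_eq gm_def)

lemma l_om_deriv: "(l_om has_derivative (\<lambda>H::real^'k^'n. real CARD('k) * (\<Sum>i\<in>UNIV. \<Sum>j\<in>UNIV. 2 * (\<Sum>n\<in>UNIV. X$n$i * H$n$j + H$n$i * X$n$j) * gm X i j)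
   - 2 * (\<Sum>k\<in>UNIV. \<Sum>n\<in>UNIV. 2 * (H$n$k * X$n$k)) * (\<Sum>k\<in>UNIV. gm X k k))) (at X)"
  unfolding l_om_fun gm_def
  by (auto intro!: derivative_eq_intros nth2_deriv)


lemma gm_sym: "gm X i j = gm X j i"
  unfolding gm_def by (simp add: mult.commute)

lemma gm_nonneg: "gm X i i \<ge> 0"
  unfolding gm_def by (simp add: sum_nonneg)

lemma E_nth: "((\<chi> n i. if n = a \<and> i = b then 1 else 0)::real^'k^'n) $ n $ i = (if n = a \<and> i = b then 1 else 0)"
  by simp

lemma stat_eq:
  fixes X :: "real^'k^'n"
  assumes "GDERIV l_om X :> 0"
  shows "real CARD('k) * (\<Sum>j\<in>UNIV. X$a$j * gm X j b) = (\<Sum>k\<in>UNIV. gm X k k) * X$a$b"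
proof -
  define E :: "real^'k^'n" where "E = (\<chi> n i. if n = a \<and> i = b then 1 else 0)"
  have "(l_om has_derivative (\<lambda>h. h \<bullet> 0)) (at X)" using assms by (simp add: gderiv_def)
  then have "(l_om has_derivative (\<lambda>h. 0)) (at X)" by simp
  from has_derivative_unique[OF l_om_deriv this]
  have "\<And>H. real CARD('k) * (\<Sum>i\<in>UNIV. \<Sum>j\<in>UNIV. 2 * (\<Sum>n\<in>UNIV. X$n$i * H$n$j + H$n$i * X$n$j) * gm X i j)
   - 2 * (\<Sum>k\<in>UNIV. \<Sum>n\<in>UNIV. 2 * (H$n$k * X$n$k)) * (\<Sum>k\<in>UNIV. gm X k k) = 0"
    by metis
  note h = this[of E]
  have e1: "(\<Sum>n\<in>UNIV. X$n$i * E$n$j + E$n$i * X$n$j) = (if j = b then X$a$i else 0) + (if i = b then X$a$j else 0)" for i j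
  proof -
    have "(\<Sum>n\<in>UNIV. X$n$i * E$n$j) = (if j = b then X$a$i else 0)"
      by (cases "j = b") (simp_all add: E_def if_distrib[of "\<lambda>x. y * x" for y] cong: if_cong)
    moreover have "(\<Sum>n\<in>UNIV. E$n$i * X$n$j) = (if i = b then X$a$j else 0)"
      by (cases "i = b") (simp_all add: E_def if_distrib[of "\<lambda>x. x * y" for y] cong: if_cong)
    ultimately show ?thesis by (simp add: sum.distrib)
  qed
  have e2: "(\<Sum>k\<in>UNIV. \<Sum>n\<in>UNIV. 2 * (E$n$k * X$n$k)) = 2 * X$a$b"
  proof -
    have "(\<Sum>n\<in>UNIV. 2 * (E$n$k * X$n$k)) = (if k = b then 2 * X$a$b else 0)" for k
      by (cases "k = b") (simp_all add: E_def if_distrib[of "\<lambda>x. x * y" for y] sum_distrib_left[symmetric] cong: if_cong)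
    then show ?thesis by simp
  qed
  have e3: "(\<Sum>i\<in>UNIV. \<Sum>j\<in>UNIV. 2 * ((if j = b then X$a$i else 0) + (if i = b then X$a$j else 0)) * gm X i j)
     = 4 * (\<Sum>j\<in>UNIV. X$a$j * gm X j b)"
  proof -
    have "(\<Sum>i\<in>UNIV. \<Sum>j\<in>UNIV. 2 * ((if j = b then X$a$i else 0) + (if i = b then X$a$j else 0)) * gm X i j)
      = (\<Sum>i\<in>UNIV. 2 * (X$a$i * gm X i b)) + (\<Sum>j\<in>UNIV. 2 * (X$a$j * gm X b j))"
    proof -
      have pt: "2 * ((if j = b then X$a$i else 0) + (if i = b then X$a$j else 0)) * gm X i j
          = (if j = b then 2 * (X$a$i * gm X i j) else 0) + (if i = b then 2 * (X$a$j * gm X i j) else 0)" for i j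
        by auto
      have c: "(\<Sum>j\<in>UNIV. if P then f j else 0) = (if P then sum f UNIV else (0::real))" for P f
        by auto
      show ?thesis by (simp only: pt sum.distrib c) simp
    qed
    also have "\<dots> = 4 * (\<Sum>j\<in>UNIV. X$a$j * gm X j b)"
      by (simp add: gm_sym[of X b] sum_distrib_left[symmetric])
    finally show ?thesis .
  qed
  from h show ?thesis unfolding e1 e2 e3 by (simp add: algebra_simps)
qed


lemma stat_zero:
  fixes X :: "real^'k^'n"
  assumes "GDERIV l_om X :> 0"
  shows "l_om X = 0"
proof -
  define T where "T = (\<Sum>k\<in>UNIV. gm X k k)"
  define K where "K = real CARD('k)"
  have A: "K * (\<Sum>l\<in>UNIV. X$n$l * gm X l j) = T * X$n$j" for n j
    using stat_eq[OF assms] unfolding K_def T_def by blast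
  have B: "K * (\<Sum>l\<in>UNIV. gm X i l * gm X l j) = T * gm X i j" for i j
  proof -
    have "K * (\<Sum>l\<in>UNIV. gm X i l * gm X l j) = K * (\<Sum>l\<in>UNIV. \<Sum>n\<in>UNIV. X$n$i * (X$n$l * gm X l j))"
      by (simp add: gm_def sum_distrib_right algebra_simps)
    also have "\<dots> = (\<Sum>n\<in>UNIV. X$n$i * (K * (\<Sum>l\<in>UNIV. X$n$l * gm X l j)))"
      by (subst sum.swap) (simp add: sum_distrib_left algebra_simps)
    also have "\<dots> = (\<Sum>n\<in>UNIV. T * (X$n$i * X$n$j))"
      unfolding A by (simp add: algebra_simps)
    also have "\<dots> = T * gm X i j" by (simp add: gm_def sum_distrib_left)
    finally show ?thesis .
  qed
  have "K * (\<Sum>i\<in>UNIV. \<Sum>j\<in>UNIV. (gm X i j)^2) = (\<Sum>i\<in>UNIV. K * (\<Sum>j\<in>UNIV. gm X i j * gm X j i))"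
  proof -
    have sq: "(gm X i j)^2 = gm X i j * gm X j i" for i j by (simp add: power2_eq_square gm_sym[of X j i])
    show ?thesis by (simp only: sq sum_distrib_left)
  qed
  also have "\<dots> = (\<Sum>i\<in>UNIV. T * gm X i i)" by (simp add: B)
  also have "\<dots> = T^2" by (simp add: T_def power2_eq_square sum_distrib_left)
  finally show ?thesis unfolding l_om_eq K_def T_def by simp
qed

lemma var_identity:
  fixes a :: "'k::finite \<Rightarrow> real"
  shows "(\<Sum>i\<in>UNIV. \<Sum>j\<in>UNIV. (a i - a j)^2) = 2 * real CARD('k) * (\<Sum>i\<in>UNIV. (a i)^2) - 2 * (\<Sum>i\<in>UNIV. a i)^2"
proof -
  have "(\<Sum>i\<in>UNIV. \<Sum>j\<in>UNIV. (a i - a j)^2) = (\<Sum>i\<in>UNIV. \<Sum>j\<in>UNIV. (a i)^2 + (a j)^2 - 2 * (a i * a j))"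
    by (simp add: power2_diff algebra_simps)
  also have "\<dots> = 2 * real CARD('k) * (\<Sum>i\<in>UNIV. (a i)^2) - 2 * (\<Sum>i\<in>UNIV. \<Sum>j\<in>UNIV. a i * a j)"
  proof -
    have 1: "(\<Sum>i\<in>UNIV. \<Sum>j\<in>UNIV. (a i)^2 + (a j)^2 - 2 * (a i * a j)) =
      (\<Sum>i\<in>UNIV. \<Sum>j\<in>(UNIV::'k set). (a i)^2) + (\<Sum>i\<in>(UNIV::'k set). \<Sum>j\<in>UNIV. (a j)^2) - (\<Sum>i\<in>UNIV. \<Sum>j\<in>UNIV. 2 * (a i * a j))"
      by (simp add: sum.distrib sum_subtractf)
    have 2: "(\<Sum>i\<in>UNIV. \<Sum>j\<in>UNIV. 2 * (a i * a j)) = 2 * (\<Sum>i\<in>UNIV. \<Sum>j\<in>UNIV. a i * a j)"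
      by (simp add: sum_distrib_left)
    show ?thesis unfolding 1 2 by (simp add: sum_distrib_left mult.assoc)
  qed
  also have "(\<Sum>i\<in>UNIV. \<Sum>j\<in>UNIV. a i * a j) = (\<Sum>i\<in>UNIV. a i)^2"
    by (simp add: power2_eq_square sum_product)
  finally show ?thesis .
qed

lemma l_om_decomp:
  fixes X :: "real^'k^'n"
  shows "l_om X = real CARD('k) * (\<Sum>i\<in>UNIV. \<Sum>j\<in>UNIV-{i}. (gm X i j)^2)
     + (\<Sum>i\<in>UNIV. \<Sum>j\<in>UNIV. (gm X i i - gm X j j)^2) / 2"
proof -
  have "(\<Sum>j\<in>UNIV. (gm X i j)^2) = (gm X i i)^2 + (\<Sum>j\<in>UNIV-{i}. (gm X i j)^2)" for i
    by (simp add: sum.remove)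
  then have "(\<Sum>i\<in>UNIV. \<Sum>j\<in>UNIV. (gm X i j)^2) = (\<Sum>i\<in>UNIV. (gm X i i)^2) + (\<Sum>i\<in>UNIV. \<Sum>j\<in>UNIV-{i}. (gm X i j)^2)"
    by (simp add: sum.distrib)
  then show ?thesis unfolding l_om_eq var_identity[of "\<lambda>i. gm X i i"] by (simp add: field_simps)
qed


lemma l_om_nonneg: "l_om (X::real^'a^'b) \<ge> 0"
proof -
  have "(\<Sum>i\<in>UNIV. \<Sum>j\<in>UNIV-{i}. (gm X i j)^2) \<ge> 0" by (intro sum_nonneg) simp
  moreover have "(\<Sum>i\<in>UNIV. \<Sum>j\<in>(UNIV::'a set). (gm X i i - gm X j j)^2) \<ge> 0" by (intro sum_nonneg) simp
  ultimately show ?thesis unfolding l_om_decomp by simp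
qed

lemma G_comp: "(transpose X ** X = \<alpha> *\<^sub>R mat 1) \<longleftrightarrow> (\<forall>i j. gm X i j = (if i = j then \<alpha> else 0))"
  by (auto simp: vec_eq_iff G_nth mat_def)

lemma zero_iff:
  fixes X :: "real^'k^'n"
  shows "l_om X = 0 \<longleftrightarrow> (\<exists>\<alpha>\<ge>0. transpose X ** X = \<alpha> *\<^sub>R mat 1)"
proof
  assume z: "l_om X = 0"
  define P where "P = (\<Sum>i\<in>UNIV. \<Sum>j\<in>UNIV-{i}. (gm X i j)^2)"
  define Q where "Q = (\<Sum>i\<in>UNIV. \<Sum>j\<in>(UNIV::'k set). (gm X i i - gm X j j)^2)"
  have P0: "P \<ge> 0" unfolding P_def by (intro sum_nonneg) simp
  have Q0: "Q \<ge> 0" unfolding Q_def by (intro sum_nonneg) simp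
  have K0: "real CARD('k) > 0" by simp
  have "real CARD('k) * P + Q / 2 = 0" using z unfolding l_om_decomp P_def Q_def .
  then have "real CARD('k) * P = 0" "Q = 0"
  proof -
    have "real CARD('k) * P \<ge> 0" using P0 by simp
    then show "real CARD('k) * P = 0" "Q = 0" using \<open>real CARD('k) * P + Q / 2 = 0\<close> Q0 by linarith+
  qed
  then have "P = 0" "Q = 0" by auto
  then have off: "\<forall>i. \<forall>j\<in>UNIV-{i}. (gm X i j)^2 = 0" and dg: "\<forall>i j. (gm X i i - gm X j j)^2 = 0"
    unfolding P_def Q_def by (simp_all add: sum_nonneg_eq_0_iff sum_nonneg)
  define \<alpha> where "\<alpha> = gm X undefined undefined"
  have "gm X i j = (if i = j then \<alpha> else 0)" for i j
  proof (cases "i = j")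
    case True
    then show ?thesis using dg[rule_format, of i undefined] unfolding \<alpha>_def by simp
  next
    case False
    then show ?thesis using off[rule_format, of i j] by (simp, metis gm_sym)
  qed
  then have "\<forall>i j. gm X i j = (if i = j then \<alpha> else 0)" by blast
  moreover have "\<alpha> \<ge> 0" unfolding \<alpha>_def by (rule gm_nonneg)
  ultimately show "\<exists>\<alpha>\<ge>0. transpose X ** X = \<alpha> *\<^sub>R mat 1" using G_comp by blast
next
  assume "\<exists>\<alpha>\<ge>0. transpose X ** X = \<alpha> *\<^sub>R mat 1"
  then obtain \<alpha> where g: "\<forall>i j. gm X i j = (if i = j then \<alpha> else 0)" using G_comp by blast
  have sq: "(if i = j then \<alpha> else 0)^2 = (if i = j then \<alpha>^2 else (0::real))" for i j :: 'k by simp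
  have 1: "(\<Sum>i\<in>UNIV. \<Sum>j\<in>UNIV. (gm X i j)^2) = real CARD('k) * \<alpha>^2"
    by (simp only: g sq) simp
  have 2: "(\<Sum>k\<in>UNIV. gm X k k) = real CARD('k) * \<alpha>" by (simp add: g)
  show "l_om X = 0" unfolding l_om_eq 1 2 by (simp add: power2_eq_square)
qed



lemma diag_mult:
  fixes S :: "real^'k^'k"
  assumes "\<forall>i j. i \<noteq> j \<longrightarrow> S$i$j = 0"
  shows "(S ** B)$i$j = S$i$i * B$i$j"
proof -
  have pt: "S$i$l * B$l$j = (if l = i then S$i$i * B$i$j else 0)" for l
    using assms by (cases "l = i") simp_all
  have "(\<Sum>l\<in>UNIV. S$i$l * B$l$j) = (\<Sum>l\<in>UNIV. if l = i then S$i$i * B$i$j else 0)"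
    by (rule sum.cong[OF refl]) (rule pt)
  also have "\<dots> = S$i$i * B$i$j" by simp
  finally have "(\<Sum>l\<in>UNIV. S$i$l * B$l$j) = S$i$i * B$i$j" .
  then show ?thesis by (simp add: matrix_matrix_mult_def)
qed

lemma frob_trace: "(frob_norm (A::real^'m^'m))^2 = trace (A ** transpose A)"
  unfolding frob_sq trace_def by (simp add: matrix_matrix_mult_def transpose_def power2_eq_square)

lemma cancel_orth:
  fixes U :: "real^'k^'n"
  assumes "transpose U ** U = mat 1"
  shows "transpose U ** (U ** M) = M"
  by (simp add: matrix_mul_assoc assms)

lemma trace_conj:
  fixes V :: "real^'k^'k"
  assumes "transpose V ** V = mat 1"
  shows "trace (V ** (M ** transpose V)) = trace M"
proof -
  have "trace (V ** (M ** transpose V)) = trace ((M ** transpose V) ** V)" by (rule trace_mul_sym)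
  also have "\<dots> = trace M" by (simp add: matrix_mul_assoc[symmetric] assms)
  finally show ?thesis .
qed

lemma svd_part:
  fixes X :: "real^'k^'n"
  assumes "is_svd X U S V"
  shows "l_om X = real CARD('k) * (\<Sum>k\<in>UNIV. (S$k$k)^4) - (\<Sum>k\<in>UNIV. (S$k$k)^2)^2"
proof -
  have U: "transpose U ** U = mat 1" and V: "transpose V ** V = mat 1"
    and dS: "\<forall>i j. i \<noteq> j \<longrightarrow> S$i$j = 0" and X: "X = U ** S ** transpose V"
    using assms unfolding is_svd_def by auto
  have ST: "transpose S = S"
    using dS by (auto simp: vec_eq_iff transpose_def) (metis)
  define G where "G = transpose X ** X"
  have G: "G = V ** (S ** (S ** transpose V))"
    unfolding G_def X by (simp add: matrix_transpose_mul ST matrix_mul_assoc[symmetric] cancel_orth[OF U])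
  have GT: "transpose G = G"
    unfolding G by (simp add: matrix_transpose_mul ST matrix_mul_assoc[symmetric])
  have GG: "G ** transpose G = V ** (S ** (S ** (S ** (S ** transpose V))))"
    unfolding GT unfolding G by (simp add: matrix_mul_assoc[symmetric] cancel_orth[OF V])
  have f1: "(frob_norm G)^2 = (\<Sum>k\<in>UNIV. (S$k$k)^4)"
  proof -
    have "(frob_norm G)^2 = trace (S ** (S ** (S ** S)))"
      unfolding frob_trace GG using trace_conj[OF V, of "S ** (S ** (S ** S))"]
      by (simp add: matrix_mul_assoc)
    also have "\<dots> = (\<Sum>k\<in>UNIV. (S$k$k)^4)"
      unfolding trace_def by (simp add: diag_mult[OF dS] power4_eq_xxxx mult.assoc)
    finally show ?thesis .
  qed
  have f2: "(frob_norm X)^2 = (\<Sum>k\<in>UNIV. (S$k$k)^2)"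
  proof -
    have "(frob_norm X)^2 = trace G" unfolding frobX trace_def G_def G_nth ..
    also have "\<dots> = trace (S ** S)" unfolding G using trace_conj[OF V, of "S ** S"]
      by (simp add: matrix_mul_assoc)
    also have "\<dots> = (\<Sum>k\<in>UNIV. (S$k$k)^2)"
      unfolding trace_def by (simp add: diag_mult[OF dS] power2_eq_square)
    finally show ?thesis .
  qed
  have "(frob_norm X)^4 = ((frob_norm X)^2)^2" by simp
  also have "\<dots> = (\<Sum>k\<in>UNIV. (S$k$k)^2)^2" by (simp only: f2)
  finally have f3: "(frob_norm X)^4 = (\<Sum>k\<in>UNIV. (S$k$k)^2)^2" .
  show ?thesis unfolding l_om_def G_def[symmetric] f1 f3 ..
qed


theorem mainTheorem7:
  fixes X :: "real^'k^'n"
  assumes "CARD('k) \<le> CARD('n)"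
  shows "(\<forall>U S V. is_svd X U S V \<longrightarrow>
            l_om X = real CARD('k) * (\<Sum>k\<in>UNIV. (S$k$k)^4) - (\<Sum>k\<in>UNIV. (S$k$k)^2)^2)
       \<and> l_om X \<ge> 0
       \<and> (l_om X = 0 \<longleftrightarrow> (\<exists>\<alpha>\<ge>0. transpose X ** X = \<alpha> *\<^sub>R mat 1))
       \<and> (GDERIV l_om X :> 0 \<longrightarrow> (\<exists>\<alpha>\<ge>0. transpose X ** X = \<alpha> *\<^sub>R mat 1))"
  using svd_part[of X] l_om_nonneg[of X] zero_iff[of X] stat_zero[of X] by blast

end
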